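(* Let $n\ge 1$, $k\ge 1$ be integers, $d=\gcd(k,n)$, $n=td$, let $\lambda\in\mathbb{F}_{2^n}^*$ and $f(x)=Tr(\lambda x^{2^k+1})$ for $x\in\mathbb{F}_{2^n}$. Then $f$ is negabent if and only if $\lambda$ cannot be written as $$\frac{v_0^{2^{2k}+1}}{(v_0+v_1)^{2^k+1}}$$ for some $v_0\in\mathbb{F}_{2^n}\setminus\mathbb{F}_{2^d}$ with $v_1=v_0^{2^k}$.
   Context: $Tr=Tr_1^n:\mathbb{F}_{2^n}\to\mathbb{F}_2$ is the absolute trace. Fix a self-dual basis $\{\alpha_1,\dots,\alpha_n\}$ of $\mathbb{F}_{2^n}$ over $\mathbb{F}_2$ (i.e. $Tr(\alpha_i\alpha_j)=\delta_{ij}$) and identify $x=\sum x_i\alpha_i$ with $(x_1,\dots,x_n)\in\mathbb{F}_2^n$; let $wt(x)$ be the number of nonzero coordinates. For $f:\mathbb{F}_{2^n}\to\mathbb{F}_2$, $\mathcal{N}_f(\mu)=2^{-n/2}\sum_{x}(-1)^{f(x)+Tr(\mu x)}\,\mathrm{i}^{wt(x)}$ ($\mathrm{i}=\sqrt{-1}$), and $f$ is negabent if $|\mathcal{N}_f(\mu)|=1$ for all $\mu\in\mathbb{F}_{2^n}$. *)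

theory Defs
  imports Complex_Main
begin

text \<open>The field F_{2^n} is modelled by a finite field type 'a with CARD('a) = 2^n.
  Elements of F_2 inside 'a are 0 and 1.\<close>

definition tr :: "nat \<Rightarrow> 'a::field \<Rightarrow> 'a" where
  "tr n x = (\<Sum>i<n. x ^ (2 ^ i))"

definition self_dual_basis :: "nat \<Rightarrow> (nat \<Rightarrow> 'a::field) \<Rightarrow> bool" where
  "self_dual_basis n \<alpha> \<longleftrightarrow>
     (\<forall>i<n. \<forall>j<n. tr n (\<alpha> i * \<alpha> j) = (if i = j then 1 else 0))"

definition coords :: "nat \<Rightarrow> (nat \<Rightarrow> 'a::field) \<Rightarrow> 'a \<Rightarrow> nat \<Rightarrow> bool" where
  "coords n \<alpha> x = (THE c. (\<forall>i. n \<le> i \<longrightarrow> \<not> c i) \<and>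
                           x = (\<Sum>i<n. if c i then \<alpha> i else 0))"

definition wt :: "nat \<Rightarrow> (nat \<Rightarrow> 'a::field) \<Rightarrow> 'a \<Rightarrow> nat" where
  "wt n \<alpha> x = card {i. i < n \<and> coords n \<alpha> x i}"

text \<open>(-1)^b for b in F_2 (embedded in 'a).\<close>
definition sgn2 :: "'a::field \<Rightarrow> complex" where
  "sgn2 b = (if b = 0 then 1 else -1)"

definition nega_transform ::
  "nat \<Rightarrow> (nat \<Rightarrow> 'a::{field,finite}) \<Rightarrow> ('a \<Rightarrow> 'a) \<Rightarrow> 'a \<Rightarrow> complex" where
  "nega_transform n \<alpha> f \<mu> =
     (1 / complex_of_real (sqrt (2 ^ n))) *
       (\<Sum>x\<in>UNIV. sgn2 (f x + tr n (\<mu> * x)) * \<i> ^ (wt n \<alpha> x))"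

definition negabent :: "nat \<Rightarrow> (nat \<Rightarrow> 'a::{field,finite}) \<Rightarrow> ('a \<Rightarrow> 'a) \<Rightarrow> bool" where
  "negabent n \<alpha> f \<longleftrightarrow> (\<forall>\<mu>. cmod (nega_transform n \<alpha> f \<mu>) = 1)"

end

theory Submission
  imports Defs
begin

lemma pow_card_field:
  fixes x :: "'a::{field,finite}"
  shows "x ^ card (UNIV::'a set) = x"
proof (cases "x = 0")
  case True
  have "card (UNIV::'a set) > 0" by (simp add: card_gt_0_iff)
  then show ?thesis using True by (simp add: power_0_left)
next
  case False
  let ?U = "UNIV - {0::'a}"
  have bij: "bij_betw (\<lambda>y. x * y) ?U ?U"
    unfolding bij_betw_def inj_on_def
  proof (intro conjI ballI impI)
    show "(*) x ` ?U = ?U"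
    proof
      show "(*) x ` ?U \<subseteq> ?U" using False by auto
      show "?U \<subseteq> (*) x ` ?U"
      proof
        fix z assume "z \<in> ?U"
        then have "z = x * (z / x)" "z / x \<in> ?U" using False by auto
        then show "z \<in> (*) x ` ?U" by blast
      qed
    qed
  qed (use False in auto)
  have "(\<Prod>y\<in>?U. x * y) = (\<Prod>y\<in>?U. y)"
    using prod.reindex_bij_betw[OF bij, of "\<lambda>y. y"] by simp
  moreover have "(\<Prod>y\<in>?U. x * y) = x ^ card ?U * (\<Prod>y\<in>?U. y)"
    by (simp add: prod.distrib)
  moreover have "(\<Prod>y\<in>?U. y) \<noteq> 0" by simp
  ultimately have "x ^ card ?U = 1" by simp
  moreover have "card ?U = card (UNIV::'a set) - 1" by (simp add: card_Diff_singleton)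
  ultimately have 1: "x ^ (card (UNIV::'a set) - 1) = 1" by simp
  obtain m where m: "card (UNIV::'a set) = Suc m" using card_gt_0_iff[of "UNIV::'a set"]
    by (metis finite_UNIV UNIV_not_empty gr0_conv_Suc)
  show ?thesis using 1 unfolding m by simp
qed

locale nb =
  fixes n :: nat and \<alpha> :: "nat \<Rightarrow> 'a::{field,finite}"
  assumes n1: "n \<ge> 1" and cardA: "card (UNIV::'a set) = 2 ^ n" and sd: "self_dual_basis n \<alpha>"
begin

lemma pow_n: "(x::'a) ^ (2 ^ n) = x"
  using pow_card_field[of x] cardA by simp

lemma two: "(2::'a) = 0"
proof -
  have "((-1)::'a) ^ (2 ^ n) = -1" by (rule pow_n)
  moreover have "even ((2::nat) ^ n)" using n1 by simp
  ultimately have "(1::'a) = -1" by simp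
  then have "(1::'a) + 1 = 1 + -1" by simp
  then show ?thesis by (simp add: one_add_one)
qed

lemma add_self[simp]: "(x::'a) + x = 0"
  using two by (metis mult_2 mult_zero_left)

lemma uminus_id[simp]: "- (x::'a) = x"
  using add_self by (metis add_eq_0_iff2)

lemma minus_is_plus: "(x::'a) - y = x + y"
  by (metis diff_conv_add_uminus uminus_id)

lemma add_eq0_iff: "(x::'a) + y = 0 \<longleftrightarrow> x = y"
  by (metis add_self add.left_neutral add.assoc)

lemma sq_add: "((x::'a) + y)^2 = x^2 + y^2"
proof -
  have "(x+y)^2 = x^2 + y^2 + 2*x*y" by (simp add: power2_eq_square algebra_simps)
  then show ?thesis by (simp add: two)
qed

lemma frob_add: "((x::'a) + y) ^ (2^m) = x^(2^m) + y^(2^m)"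
proof (induction m)
  case 0 then show ?case by simp
next
  case (Suc m)
  have "(x+y)^(2^Suc m) = ((x+y)^(2^m))^2" by (simp add: power_mult[symmetric] mult.commute)
  also have "\<dots> = (x^(2^m))^2 + (y^(2^m))^2" using Suc sq_add by simp
  also have "\<dots> = x^(2^Suc m) + y^(2^Suc m)" by (simp add: power_mult[symmetric] mult.commute)
  finally show ?case .
qed

lemma frob_sum: "(\<Sum>i\<in>A. f i :: 'a) ^ (2^m) = (\<Sum>i\<in>A. f i ^ (2^m))"
  by (induction A rule: infinite_finite_induct) (simp_all add: frob_add)

lemma frob_inj: "inj (\<lambda>x::'a. x ^ (2^m))"
proof (rule injI)
  fix x y :: 'a assume "x ^ (2^m) = y ^ (2^m)"
  then have "(x + y) ^ (2^m) = 0" by (simp add: frob_add)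
  then have "x + y = 0" by simp
  then show "x = y" by (simp add: add_eq0_iff)
qed

lemma frob_surj: "surj (\<lambda>x::'a. x ^ (2^m))"
  using finite_UNIV_inj_surj[OF _ frob_inj] by simp

lemma frob_bij: "bij (\<lambda>x::'a. x ^ (2^m))"
  using frob_inj frob_surj by (simp add: bij_def)

lemma tr_add: "tr n (x + y) = tr n x + tr n (y::'a)"
  unfolding tr_def by (simp add: frob_add sum.distrib)

lemma tr0[simp]: "tr n (0::'a) = 0"
  unfolding tr_def by (simp add: power_0_left)

lemma tr_sum: "tr n (\<Sum>i\<in>A. f i) = (\<Sum>i\<in>A. tr n (f i::'a))"
  by (induction A rule: infinite_finite_induct) (simp_all add: tr_add)

lemma tr_sq: "tr n ((x::'a)^2) = tr n x"
proof -
  have "x + tr n (x^2) = (\<Sum>i<Suc n. x^(2^i))"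
    unfolding tr_def sum.lessThan_Suc_shift by (simp add: power_mult[symmetric] mult.commute)
  also have "\<dots> = tr n x + x" unfolding tr_def sum.lessThan_Suc by (simp add: pow_n)
  finally show ?thesis by (metis add.commute add_left_cancel)
qed

lemma tr_frob: "tr n ((x::'a)^(2^m)) = tr n x"
proof (induction m)
  case 0 then show ?case by simp
next
  case (Suc m)
  have "x^(2^Suc m) = (x^(2^m))^2" by (simp add: power_mult[symmetric] mult.commute)
  then show ?case using Suc tr_sq by simp
qed

lemma tr_sq_self: "(tr n (x::'a))^2 = tr n x"
proof -
  have "(tr n x)^(2^1) = tr n (x^2)"
    unfolding tr_def frob_sum by (simp add: power_mult[symmetric] mult.commute)
  then show ?thesis using tr_sq by simp
qed

lemma tr01: "tr n (x::'a) = 0 \<or> tr n x = 1"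
proof -
  have "tr n x * (tr n x - 1) = 0" using tr_sq_self[of x] by (simp add: power2_eq_square algebra_simps)
  then show ?thesis by auto
qed


lemma one_ne_zero': "(1::'a) \<noteq> 0" by simp

definition chi :: "'a \<Rightarrow> complex" where "chi x = sgn2 (tr n x)"

lemma chi_add: "chi (x + y) = chi x * chi y"
  unfolding chi_def sgn2_def tr_add using tr01[of x] tr01[of y] by auto

lemma chi0[simp]: "chi 0 = 1" unfolding chi_def sgn2_def by simp

lemma chi_pm: "chi x = 1 \<or> chi x = -1" unfolding chi_def sgn2_def by auto

lemma cnj_chi[simp]: "cnj (chi x) = chi x" using chi_pm[of x] by auto

lemma chi_sq[simp]: "chi x * chi x = 1" using chi_pm[of x] by auto

lemma chi_nz[simp]: "chi x \<noteq> 0" using chi_pm[of x] by auto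

lemma tr_alpha: "i < n \<Longrightarrow> j < n \<Longrightarrow> tr n (\<alpha> i * \<alpha> j) = (if i = j then 1 else 0)"
  using sd unfolding self_dual_basis_def by blast

lemma chi_z0: "chi (\<alpha> 0 * \<alpha> 0) = -1"
  using tr_alpha[of 0 0] n1 unfolding chi_def sgn2_def by simp

lemma sum_chi: "(\<Sum>z\<in>UNIV. chi z) = 0"
proof -
  let ?z0 = "\<alpha> 0 * \<alpha> 0"
  have b: "bij_betw (\<lambda>z. z + ?z0) UNIV UNIV"
    by (rule bij_betw_byWitness[where f'="\<lambda>z. z - ?z0"]) auto
  have "(\<Sum>z\<in>UNIV. chi z) = (\<Sum>z\<in>UNIV. chi (z + ?z0))"
    using sum.reindex_bij_betw[OF b, of chi] by simp
  also have "\<dots> = - (\<Sum>z\<in>UNIV. chi z)" by (simp add: chi_add chi_z0 sum_negf)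
  finally show ?thesis by simp
qed

lemma sum_chi_mult: "(\<Sum>z\<in>UNIV. chi (e * z)) = (if e = 0 then of_nat (2^n) else 0)"
proof (cases "e = 0")
  case True then show ?thesis using cardA by simp
next
  case False
  have b: "bij_betw (\<lambda>z. e * z) UNIV UNIV"
    by (rule bij_betw_byWitness[where f'="\<lambda>z. z / e"]) (use False in auto)
  have "(\<Sum>z\<in>UNIV. chi (e * z)) = (\<Sum>z\<in>UNIV. chi z)"
    using sum.reindex_bij_betw[OF b, of chi] by simp
  then show ?thesis using False sum_chi by simp
qed

definition Sx :: "'a \<Rightarrow> nat set" where "Sx x = {j. j < n \<and> tr n (x * \<alpha> j) = 1}"

definition B :: "nat set \<Rightarrow> 'a" where "B T = (\<Sum>i\<in>T. \<alpha> i)"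

lemma Sx_sub: "Sx x \<subseteq> {..<n}" unfolding Sx_def by auto

lemma finite_Sx[simp]: "finite (Sx x)" using Sx_sub finite_subset by blast

lemma trB: assumes "T \<subseteq> {..<n}" "j < n"
  shows "tr n (B T * \<alpha> j) = (if j \<in> T then 1 else 0)"
proof -
  have fT: "finite T" using assms(1) finite_subset by blast
  have "tr n (B T * \<alpha> j) = (\<Sum>i\<in>T. tr n (\<alpha> i * \<alpha> j))"
    unfolding B_def sum_distrib_right tr_sum ..
  also have "\<dots> = (\<Sum>i\<in>T. if i = j then 1 else 0)"
    by (rule sum.cong) (use assms tr_alpha in auto)
  also have "\<dots> = (if j \<in> T then 1 else 0)" using fT by simp
  finally show ?thesis .
qed

lemma Sx_B: assumes "T \<subseteq> {..<n}" shows "Sx (B T) = T"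
  unfolding Sx_def using assms trB[OF assms] by (auto split: if_splits)

lemma B_surj: "\<exists>T. T \<subseteq> {..<n} \<and> x = B T"
proof -
  have inj: "inj_on B (Pow {..<n})"
    by (rule inj_onI) (metis PowD Sx_B)
  have "card (B ` Pow {..<n}) = 2 ^ n" using card_image[OF inj] by (simp add: card_Pow)
  then have "B ` Pow {..<n} = UNIV" using cardA by (simp add: card_eq_UNIV_imp_eq_UNIV)
  then show ?thesis by (metis PowD UNIV_I imageE)
qed

lemma rep: "B (Sx x) = x"
  using B_surj[of x] Sx_B by metis

lemma coords_eq: "coords n \<alpha> x = (\<lambda>i. i \<in> Sx x)"
  unfolding coords_def
proof (rule the_equality)
  show "(\<forall>i. n \<le> i \<longrightarrow> \<not> i \<in> Sx x) \<and> x = (\<Sum>i<n. if i \<in> Sx x then \<alpha> i else 0)"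
  proof
    show "\<forall>i. n \<le> i \<longrightarrow> \<not> i \<in> Sx x" unfolding Sx_def by auto
    have "(\<Sum>i<n. if i \<in> Sx x then \<alpha> i else 0) = (\<Sum>i\<in>{..<n} \<inter> Sx x. \<alpha> i)"
      by (simp add: sum.inter_restrict)
    also have "{..<n} \<inter> Sx x = Sx x" using Sx_sub by blast
    finally show "x = (\<Sum>i<n. if i \<in> Sx x then \<alpha> i else 0)" using rep[of x] unfolding B_def by simp
  qed
next
  fix c assume c: "(\<forall>i. n \<le> i \<longrightarrow> \<not> c i) \<and> x = (\<Sum>i<n. if c i then \<alpha> i else 0)"
  let ?T = "{i. i < n \<and> c i}"
  have "(\<Sum>i<n. if c i then \<alpha> i else 0) = (\<Sum>i\<in>{..<n} \<inter> {i. c i}. \<alpha> i)"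
    by (simp add: sum.inter_restrict)
  also have "{..<n} \<inter> {i. c i} = ?T" by auto
  finally have "x = B ?T" using c unfolding B_def by simp
  then have "Sx x = ?T" using Sx_B[of ?T] by auto
  then show "c = (\<lambda>i. i \<in> Sx x)" using c by (auto simp: fun_eq_iff not_less)
qed

lemma wt_eq: "wt n \<alpha> x = card (Sx x)"
  unfolding wt_def coords_eq using Sx_sub by (metis (no_types, lifting) Collect_cong Sx_def mem_Collect_eq)

lemma wt0[simp]: "wt n \<alpha> 0 = 0"
  unfolding wt_eq Sx_def by simp

lemma xor01: "b = 0 \<or> b = 1 \<Longrightarrow> c = 0 \<or> c = 1 \<Longrightarrow> (b + c = (1::'a)) \<longleftrightarrow> ((b = 1) \<noteq> (c = 1))"
  by auto

lemma Sx_add: "Sx (x + a) = (Sx x - Sx a) \<union> (Sx a - Sx x)"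
  unfolding Sx_def distrib_right tr_add using xor01[OF tr01 tr01] by auto

lemma of_nat_char2: "(of_nat m :: 'a) = (if even m then 0 else 1)"
  by (induction m) auto

lemma tr_mul_card: "tr n (x * a) = of_nat (card (Sx x \<inter> Sx a))"
proof -
  have "tr n (x * a) = tr n (\<Sum>i\<in>Sx a. x * \<alpha> i)"
    using rep[of a] unfolding B_def by (metis sum_distrib_left)
  also have "\<dots> = (\<Sum>i\<in>Sx a. tr n (x * \<alpha> i))" by (rule tr_sum)
  also have "\<dots> = (\<Sum>i\<in>Sx a. if i \<in> Sx x then 1 else 0)"
    by (rule sum.cong) (use tr01 in \<open>auto simp: Sx_def\<close>)
  also have "\<dots> = (\<Sum>i\<in>Sx a \<inter> Sx x. 1)" by (rule sum.inter_restrict[symmetric]) simp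
  also have "\<dots> = of_nat (card (Sx x \<inter> Sx a))" by (simp add: Int_commute)
  finally show ?thesis .
qed

lemma chi_mul: "chi (x * a) = (-1) ^ card (Sx x \<inter> Sx a)"
  unfolding chi_def tr_mul_card of_nat_char2 sgn2_def by auto

lemma card_add: "card (Sx (x + a)) + 2 * card (Sx x \<inter> Sx a) = card (Sx x) + card (Sx a)"
proof -
  let ?X = "Sx x" and ?A = "Sx a"
  have 1: "card ?X = card (?X - ?A) + card (?X \<inter> ?A)"
    by (metis Diff_Diff_Int Diff_disjoint Un_Diff_Int card_Un_disjoint finite_Diff finite_Int finite_Sx Int_commute)
  have 2: "card ?A = card (?A - ?X) + card (?X \<inter> ?A)"
    by (metis Diff_Diff_Int Diff_disjoint Un_Diff_Int card_Un_disjoint finite_Diff finite_Int finite_Sx Int_commute)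
  have 3: "card (Sx (x + a)) = card (?X - ?A) + card (?A - ?X)"
    unfolding Sx_add by (rule card_Un_disjoint) auto
  show ?thesis using 1 2 3 by simp
qed

lemma chi_frob: "chi (y ^ (2^m)) = chi y"
  unfolding chi_def tr_frob ..

lemma ipow: assumes "U + 2 * c = V + W"
  shows "\<i> ^ V * (-\<i>) ^ U = (-\<i>) ^ W * (-1) ^ c"
proof -
  have m1: "((-1::complex) ^ c) * ((-1) ^ c) = 1"
    by (metis power_mult_distrib mult_minus_left mult_1 power_one minus_minus mult_minus_right)
  have "(-\<i>) ^ (2 * c) = ((-1)::complex) ^ c" by (simp add: power_mult)
  then have "\<i> ^ V * (-\<i>) ^ U * (-1) ^ c = \<i> ^ V * (-\<i>) ^ (U + 2 * c)"
    by (simp add: power_add)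
  also have "\<dots> = \<i> ^ V * (-\<i>) ^ V * (-\<i>) ^ W" using assms by (simp add: power_add)
  also have "\<dots> = (\<i> * (-\<i>)) ^ V * (-\<i>) ^ W" by (simp only: power_mult_distrib)
  also have "\<dots> = (-\<i>) ^ W"
  proof -
    have i1: "\<i> * (-\<i>) = 1" by simp
    show ?thesis by (simp only: i1 power_one mult_1)
  qed
  finally have "\<i> ^ V * (-\<i>) ^ U * (-1) ^ c * (-1) ^ c = (-\<i>) ^ W * (-1) ^ c" by simp
  then show ?thesis using m1 by (simp add: mult.assoc)
qed

lemma fix_mult: "(x::'a) ^ (2^m) = x \<Longrightarrow> x ^ (2^(m*j)) = x"
proof (induction j)
  case 0 then show ?case by simp
next
  case (Suc j)
  have "x ^ (2^(m * Suc j)) = (x ^ (2^(m*j))) ^ (2^m)" by (simp add: power_add power_mult[symmetric] mult.commute)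
  then show ?case using Suc by simp
qed

lemma fix_dvd: "d dvd m \<Longrightarrow> (x::'a) ^ (2^d) = x \<Longrightarrow> x ^ (2^m) = x"
  using fix_mult by (metis dvd_def)

lemma fix_gcd_gen: "(x::'a) ^ (2^a) = x \<longrightarrow> x ^ (2^b) = x \<longrightarrow> x ^ (2^gcd a b) = x"
proof (induction a b rule: gcd_nat_induct)
  case (base m) then show ?case by simp
next
  case (step m b)
  show ?case
  proof (intro impI)
    assume h1: "x ^ (2^m) = x" and h2: "x ^ (2^b) = x"
    have mm: "m = m mod b + b * (m div b)" by simp
    have "x ^ (2^(m mod b)) = (x ^ (2^(b * (m div b)))) ^ (2^(m mod b))" using fix_mult[OF h2] by simp
    also have "\<dots> = x ^ (2^(b * (m div b)) * 2^(m mod b))" by (simp only: power_mult)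
    also have "\<dots> = x ^ (2^m)" using mm by (metis power_add mult.commute)
    finally have "x ^ (2^(m mod b)) = x" using h1 by simp
    then have "x ^ (2^gcd b (m mod b)) = x" using step h2 by blast
    then show "x ^ (2^gcd m b) = x" using step(1) by (simp add: gcd_non_0_nat)
  qed
qed

lemma fix_gcd: "(x::'a) ^ (2^k) = x \<Longrightarrow> x ^ (2^gcd k n) = x"
  using fix_gcd_gen pow_n by blast

lemma keyid:
  fixes X0 X1 X2 X3 :: 'a
  assumes "X0 \<noteq> 0" "X1 \<noteq> 0" "X2 \<noteq> 0" "X3 \<noteq> 0" "X0 + X1 \<noteq> 0" "X1 + X2 \<noteq> 0" "X2 + X3 \<noteq> 0"
  shows "(X0*X2/((X0+X1)*(X1+X2))) * ((X0+X1)/(X0*X1)) + (X1*X3/((X1+X2)*(X2+X3))) * ((X2+X3)/(X2*X3))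
          + (X1+X2)/(X1*X2) = 0"
proof -
  have t1: "(X0*X2/((X0+X1)*(X1+X2))) * ((X0+X1)/(X0*X1)) = X2/(X1*(X1+X2))"
  proof -
    have "(X0*X2/((X0+X1)*(X1+X2))) * ((X0+X1)/(X0*X1)) = (X2 * (X0*(X0+X1))) / ((X1*(X1+X2)) * (X0*(X0+X1)))"
      by (simp add: mult_ac)
    also have "\<dots> = X2/(X1*(X1+X2))" by (rule nonzero_mult_divide_mult_cancel_right) (use assms in simp)
    finally show ?thesis .
  qed
  have t2: "(X1*X3/((X1+X2)*(X2+X3))) * ((X2+X3)/(X2*X3)) = X1/(X2*(X1+X2))"
  proof -
    have "(X1*X3/((X1+X2)*(X2+X3))) * ((X2+X3)/(X2*X3)) = (X1 * (X3*(X2+X3))) / ((X2*(X1+X2)) * (X3*(X2+X3)))"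
      by (simp add: mult_ac)
    also have "\<dots> = X1/(X2*(X1+X2))" by (rule nonzero_mult_divide_mult_cancel_right) (use assms in simp)
    finally show ?thesis .
  qed
  have c: "\<And>a b c::'a. c \<noteq> 0 \<Longrightarrow> a / b = (a * c) / (b * c)"
    by (simp add: nonzero_mult_divide_mult_cancel_right)
  have D1: "X2/(X1*(X1+X2)) = (X2*X2)/(X1*X2*(X1+X2))"
    using c[of X2 X2 "X1*(X1+X2)"] assms by (simp add: mult_ac)
  have D2: "X1/(X2*(X1+X2)) = (X1*X1)/(X1*X2*(X1+X2))"
    using c[of X1 X1 "X2*(X1+X2)"] assms by (simp add: mult_ac)
  have D3: "(X1+X2)/(X1*X2) = ((X1+X2)*(X1+X2))/(X1*X2*(X1+X2))"
    using c[of "X1+X2" "X1+X2" "X1*X2"] assms by (simp add: mult_ac)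
  have t3: "X2/(X1*(X1+X2)) + X1/(X2*(X1+X2)) + (X1+X2)/(X1*X2)
      = (X2*X2 + X1*X1 + (X1+X2)*(X1+X2)) / (X1*X2*(X1+X2))"
    unfolding D1 D2 D3 by (simp only: add_divide_distrib)
  have t4: "X2*X2 + X1*X1 + (X1+X2)*(X1+X2) = 2*(X1*X1+X2*X2+X1*X2)" by algebra
  show ?thesis unfolding t1 t2 t3 t4 two by simp
qed

lemma pow_ne0: "(x::'a) \<noteq> 0 \<Longrightarrow> x ^ m \<noteq> 0" by simp

context
  fixes lam :: 'a and k :: nat
begin

definition E :: "'a \<Rightarrow> 'a" where
  "E a = lam * a + lam ^ (2^k) * (a ^ (2^k)) ^ (2^k) + a ^ (2^k)"

definition s :: "'a \<Rightarrow> 'a \<Rightarrow> complex" where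
  "s \<mu> x = chi (lam * x ^ (2^k+1) + \<mu> * x) * \<i> ^ (wt n \<alpha> x)"

definition g :: "'a \<Rightarrow> 'a \<Rightarrow> complex" where
  "g \<mu> a = chi (lam * a ^ (2^k+1) + \<mu> * a) * (-\<i>) ^ (wt n \<alpha> a)"

lemma alg1: "(lam * x ^ (2^k+1) + \<mu> * x) + (lam * (x + a) ^ (2^k+1) + \<mu> * (x + a)) + x * a
   = (lam * a ^ (2^k+1) + \<mu> * a) + (lam * a * x ^ (2^k) + (lam * a ^ (2^k) + a) * x)"
proof -
  have gen: "\<And>l m X A x a :: 'a. (l*(X*x) + m*x) + (l*((X+A)*(x+a)) + m*(x+a)) + x*a
     = (l*(A*a) + m*a) + (l*a*X + (l*A + a)*x) + 2*(l*X*x + m*x)"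
    by algebra
  have e1: "(x + a) ^ (2^k+1) = (x^(2^k) + a^(2^k)) * (x + a)" by (simp add: frob_add)
  have e2: "x ^ (2^k+1) = x^(2^k) * x" "a ^ (2^k+1) = a^(2^k) * a" by simp_all
  show ?thesis unfolding e1 e2 gen two by simp
qed

lemma chi_lin: "chi (lam * a * x ^ (2^k) + (lam * a ^ (2^k) + a) * x) = chi (E a * x ^ (2^k))"
proof -
  have "chi ((lam * a ^ (2^k) + a) * x) = chi (((lam * a ^ (2^k) + a) * x) ^ (2^k))"
    by (rule chi_frob[symmetric])
  also have "((lam * a ^ (2^k) + a) * x) ^ (2^k) = (lam ^ (2^k) * (a ^ (2^k)) ^ (2^k) + a ^ (2^k)) * x ^ (2^k)"
    by (simp add: frob_add power_mult_distrib)
  finally have "chi ((lam * a ^ (2^k) + a) * x) = chi ((lam ^ (2^k) * (a ^ (2^k)) ^ (2^k) + a ^ (2^k)) * x ^ (2^k))" .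
  then show ?thesis unfolding E_def by (simp add: chi_add algebra_simps)
qed

lemma pair: "s \<mu> x * cnj (s \<mu> (x + a)) = g \<mu> a * chi (E a * x ^ (2^k))"
proof -
  have ip: "\<i> ^ wt n \<alpha> x * (-\<i>) ^ wt n \<alpha> (x + a) = (-\<i>) ^ wt n \<alpha> a * chi (x * a)"
    unfolding chi_mul wt_eq by (rule ipow) (use card_add[of x a] in simp)
  have "s \<mu> x * cnj (s \<mu> (x + a)) =
     chi (lam * x ^ (2^k+1) + \<mu> * x) * chi (lam * (x + a) ^ (2^k+1) + \<mu> * (x + a)) *
       (\<i> ^ wt n \<alpha> x * (-\<i>) ^ wt n \<alpha> (x + a))"
    unfolding s_def by (simp add: complex_cnj_power mult_ac)
  also have "\<dots> = chi ((lam * x ^ (2^k+1) + \<mu> * x) + (lam * (x + a) ^ (2^k+1) + \<mu> * (x + a)) + x * a)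
       * (-\<i>) ^ wt n \<alpha> a"
    unfolding ip chi_add by (simp add: mult_ac)
  also have "\<dots> = g \<mu> a * chi (E a * x ^ (2^k))"
    unfolding alg1 chi_add chi_lin[symmetric] g_def by (simp add: mult_ac)
  finally show ?thesis .
qed

lemma sum_pair: "(\<Sum>x\<in>UNIV. s \<mu> x * cnj (s \<mu> (x + a))) = g \<mu> a * (if E a = 0 then of_nat (2^n) else 0)"
proof -
  have "(\<Sum>x\<in>UNIV. chi (E a * x ^ (2^k))) = (\<Sum>z\<in>UNIV. chi (E a * z))"
    using sum.reindex_bij_betw[OF frob_bij[of k], of "\<lambda>z. chi (E a * z)"] by simp
  then show ?thesis unfolding pair sum_distrib_left[symmetric] sum_chi_mult by simp
qed

definition K :: "'a set" where "K = {a. E a = 0}"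

lemma S_sq: "(\<Sum>x\<in>UNIV. s \<mu> x) * cnj (\<Sum>x\<in>UNIV. s \<mu> x) = of_nat (2^n) * (\<Sum>a\<in>K. g \<mu> a)"
proof -
  have "(\<Sum>x\<in>UNIV. s \<mu> x) * cnj (\<Sum>x\<in>UNIV. s \<mu> x) = (\<Sum>x\<in>UNIV. \<Sum>y\<in>UNIV. s \<mu> x * cnj (s \<mu> y))"
    by (simp add: cnj_sum sum_product)
  also have "\<dots> = (\<Sum>x\<in>UNIV. \<Sum>a\<in>UNIV. s \<mu> x * cnj (s \<mu> (x + a)))"
  proof (rule sum.cong[OF refl])
    fix x :: 'a
    have b: "bij_betw (\<lambda>a. x + a) UNIV UNIV"
      by (rule bij_betw_byWitness[where f'="\<lambda>y. y - x"]) auto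
    show "(\<Sum>y\<in>UNIV. s \<mu> x * cnj (s \<mu> y)) = (\<Sum>a\<in>UNIV. s \<mu> x * cnj (s \<mu> (x + a)))"
      using sum.reindex_bij_betw[OF b, of "\<lambda>y. s \<mu> x * cnj (s \<mu> y)"] by simp
  qed
  also have "\<dots> = (\<Sum>a\<in>UNIV. \<Sum>x\<in>UNIV. s \<mu> x * cnj (s \<mu> (x + a)))" by (rule sum.swap)
  also have "\<dots> = (\<Sum>a\<in>UNIV. g \<mu> a * (if E a = 0 then of_nat (2^n) else 0))" unfolding sum_pair ..
  also have "\<dots> = (\<Sum>a\<in>UNIV. if a \<in> K then of_nat (2^n) * g \<mu> a else 0)"
    by (rule sum.cong) (auto simp: K_def)
  also have "\<dots> = of_nat (2^n) * (\<Sum>a\<in>K. g \<mu> a)"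
    by (simp add: sum.inter_restrict[symmetric] sum_distrib_left)
  finally show ?thesis .
qed

lemma transform_eq: "nega_transform n \<alpha> (\<lambda>x. tr n (lam * x ^ (2^k+1))) \<mu>
   = (1 / complex_of_real (sqrt (2 ^ n))) * (\<Sum>x\<in>UNIV. s \<mu> x)"
  unfolding nega_transform_def s_def chi_def tr_add[symmetric] ..

lemma cmod1_iff: "cmod z = 1 \<longleftrightarrow> z * cnj z = 1"
proof -
  have "z * cnj z = complex_of_real ((cmod z)^2)" by (rule complex_norm_square[symmetric])
  then have "z * cnj z = 1 \<longleftrightarrow> (cmod z)^2 = 1" by (metis of_real_1 of_real_eq_iff)
  also have "\<dots> \<longleftrightarrow> cmod z = 1" by (smt (verit) norm_ge_zero power2_eq_1_iff)
  finally show ?thesis ..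
qed

lemma negabent_iff_H: "negabent n \<alpha> (\<lambda>x. tr n (lam * x ^ (2^k+1))) \<longleftrightarrow> (\<forall>\<mu>. (\<Sum>a\<in>K. g \<mu> a) = 1)"
proof -
  have "cmod (nega_transform n \<alpha> (\<lambda>x. tr n (lam * x ^ (2^k+1))) \<mu>) = 1 \<longleftrightarrow> (\<Sum>a\<in>K. g \<mu> a) = 1" for \<mu>
  proof -
    let ?S = "\<Sum>x\<in>UNIV. s \<mu> x"
    let ?c = "1 / complex_of_real (sqrt (2 ^ n))"
    have cc: "?c * cnj ?c = 1 / of_nat (2^n)"
    proof -
      have "cnj ?c = ?c" by simp
      moreover have r: "sqrt (2^n) * sqrt (2^n) = (2::real)^n" by simp
      have "complex_of_real (sqrt (2^n)) * complex_of_real (sqrt (2^n)) = complex_of_real (2^n)"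
        by (metis of_real_mult r)
      then have "?c * ?c = 1 / of_nat (2^n)" by simp
      ultimately show ?thesis by simp
    qed
    have "?c * ?S * cnj (?c * ?S) = (?c * cnj ?c) * (?S * cnj ?S)" by (simp add: mult_ac)
    also have "\<dots> = (\<Sum>a\<in>K. g \<mu> a)" unfolding cc S_sq by simp
    finally show ?thesis unfolding transform_eq cmod1_iff by simp
  qed
  then show ?thesis unfolding negabent_def by blast
qed

lemma E0[simp]: "E 0 = 0" unfolding E_def by (simp add: power_0_left)

lemma g_split: "g \<mu> a = (chi (lam * a ^ (2^k+1)) * (-\<i>) ^ (wt n \<alpha> a)) * chi (a * \<mu>)"
  unfolding g_def chi_add by (simp add: mult_ac)

lemma H_iff: "(\<forall>\<mu>. (\<Sum>a\<in>K. g \<mu> a) = 1) \<longleftrightarrow> (\<forall>a. E a = 0 \<longrightarrow> a = 0)"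
proof
  assume z: "\<forall>a. E a = 0 \<longrightarrow> a = 0"
  then have "K = {0}" unfolding K_def by auto
  then show "\<forall>\<mu>. (\<Sum>a\<in>K. g \<mu> a) = 1" by (simp add: g_def power_0_left)
next
  assume H: "\<forall>\<mu>. (\<Sum>a\<in>K. g \<mu> a) = 1"
  show "\<forall>a. E a = 0 \<longrightarrow> a = 0"
  proof (rule ccontr)
    assume "\<not> (\<forall>a. E a = 0 \<longrightarrow> a = 0)"
    then obtain a0 where a0: "E a0 = 0" "a0 \<noteq> 0" by auto
    define g0 where "g0 a = chi (lam * a ^ (2^k+1)) * (-\<i>) ^ (wt n \<alpha> a)" for a
    have "(\<Sum>\<mu>\<in>UNIV. (\<Sum>a\<in>K. g \<mu> a) * chi (a0 * \<mu>)) = (\<Sum>\<mu>\<in>UNIV. chi (a0 * \<mu>))"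
      using H by simp
    also have "\<dots> = 0" using sum_chi_mult a0 by simp
    finally have 0: "(\<Sum>\<mu>\<in>UNIV. (\<Sum>a\<in>K. g \<mu> a) * chi (a0 * \<mu>)) = 0" .
    have "(\<Sum>\<mu>\<in>UNIV. (\<Sum>a\<in>K. g \<mu> a) * chi (a0 * \<mu>))
        = (\<Sum>\<mu>\<in>UNIV. \<Sum>a\<in>K. g0 a * chi ((a + a0) * \<mu>))"
    proof -
      have cm: "\<And>a \<mu>. chi ((a + a0) * \<mu>) = chi (a * \<mu>) * chi (a0 * \<mu>)"
        by (simp add: distrib_right chi_add)
      show ?thesis unfolding g_split sum_distrib_right g0_def cm by (simp add: mult_ac)
    qed
    also have "\<dots> = (\<Sum>a\<in>K. g0 a * (\<Sum>\<mu>\<in>UNIV. chi ((a + a0) * \<mu>)))"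
      by (subst sum.swap) (simp add: sum_distrib_left)
    also have "\<dots> = (\<Sum>a\<in>K. if a = a0 then g0 a * of_nat (2^n) else 0)"
      by (rule sum.cong) (auto simp: sum_chi_mult add_eq0_iff)
    also have "\<dots> = g0 a0 * of_nat (2^n)" using a0 by (simp add: K_def)
    finally have "g0 a0 * of_nat (2^n) = 0" using 0 by simp
    moreover have "g0 a0 \<noteq> 0" unfolding g0_def by simp
    ultimately show False by simp
  qed
qed

lemma v0_to_a:
  assumes v: "v0 ^ (2 ^ gcd k n) \<noteq> v0" and lam: "lam = v0 ^ (2 ^ (2 * k) + 1) / (v0 + v0 ^ (2^k)) ^ (2 ^ k + 1)"
  shows "\<exists>a. a \<noteq> 0 \<and> E a = 0"
proof -
  let ?q = "2^k :: nat"
  have nf: "v0 ^ ?q \<noteq> v0" using v fix_gcd by blast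
  have v0: "v0 \<noteq> 0" using nf by (auto simp: power_0_left)
  define X0 where "X0 = v0"
  define X1 where "X1 = X0 ^ ?q"
  define X2 where "X2 = X1 ^ ?q"
  define X3 where "X3 = X2 ^ ?q"
  have nz: "X0 \<noteq> 0" "X1 \<noteq> 0" "X2 \<noteq> 0" "X3 \<noteq> 0" using v0 unfolding X0_def X1_def X2_def X3_def by simp_all
  have s01: "X0 + X1 \<noteq> 0" using nf unfolding X0_def X1_def add_eq0_iff by auto
  have s12e: "X1 + X2 = (X0 + X1) ^ ?q" unfolding X1_def X2_def frob_add ..
  have s23e: "X2 + X3 = (X1 + X2) ^ ?q" unfolding X3_def X2_def frob_add ..
  have s12: "X1 + X2 \<noteq> 0" using s01 unfolding s12e by simp
  have s23: "X2 + X3 \<noteq> 0" using s12 unfolding s23e by simp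
  have lam': "lam = X0*X2/((X0+X1)*(X1+X2))"
  proof -
    have p: "(2::nat)^(2*k) = 2^k * 2^k" by (simp add: mult_2 power_add)
    have "v0 ^ (2 ^ (2 * k) + 1) = X2 * X0"
      unfolding p X2_def X1_def X0_def by (simp add: power_mult)
    moreover have "(v0 + v0 ^ (2^k)) ^ (2 ^ k + 1) = (X1 + X2) * (X0 + X1)"
    proof -
      have "(v0 + v0^?q)^(?q+1) = (v0+v0^?q)^?q * (v0+v0^?q)" by simp
      also have "\<dots> = (X1+X2)*(X0+X1)" using s12e unfolding X0_def X1_def by simp
      finally show ?thesis .
    qed
    ultimately show ?thesis using lam by (simp add: mult_ac)
  qed
  define a where "a = (X0 + X1) / (X0 * X1)"
  have a0: "a \<noteq> 0" using s01 nz unfolding a_def by simp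
  have aq: "a ^ ?q = (X1 + X2) / (X1 * X2)"
    unfolding a_def power_divide power_mult_distrib s12e[symmetric] X1_def[symmetric] X2_def[symmetric] ..
  have aqq: "(a ^ ?q) ^ ?q = (X2 + X3) / (X2 * X3)"
    unfolding aq power_divide power_mult_distrib s23e[symmetric] X3_def[symmetric] X2_def[symmetric] ..
  have lq: "lam ^ ?q = X1*X3/((X1+X2)*(X2+X3))"
    unfolding lam' power_divide power_mult_distrib s12e[symmetric] s23e[symmetric] X1_def[symmetric] X3_def[symmetric] X2_def[symmetric] ..
  have "E a = (X0*X2/((X0+X1)*(X1+X2))) * ((X0+X1)/(X0*X1)) + (X1*X3/((X1+X2)*(X2+X3))) * ((X2+X3)/(X2*X3))
          + (X1+X2)/(X1*X2)"
    unfolding E_def unfolding aqq unfolding aq lq unfolding lam' a_def ..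
  then have "E a = 0" using keyid[OF nz s01 s12 s23] by simp
  then show ?thesis using a0 by blast
qed

lemma a_to_v0:
  assumes a0: "a \<noteq> 0" and Ea: "E a = 0"
  shows "\<exists>v0 v1. v0 ^ (2 ^ gcd k n) \<noteq> v0 \<and> v1 = v0 ^ (2^k) \<and>
           lam = v0 ^ (2 ^ (2 * k) + 1) / (v0 + v1) ^ (2 ^ k + 1)"
proof -
  let ?q = "2^k :: nat"
  obtain s where s: "s ^ (2^1) = lam * a ^ (?q + 1)" using frob_surj[of 1] by (metis surjD)
  define w where "w = a + s"
  have aw: "a = w + s" unfolding w_def by (simp add: add.assoc)
  have e1: "lam * a ^ (?q+1) = lam ^ ?q * (a ^ ?q) ^ ?q * a ^ ?q + (a ^ ?q) ^ 2"
  proof -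
    have "a ^ ?q * E a = 0" using Ea by simp
    then have "lam * a ^ (?q+1) + (lam ^ ?q * (a ^ ?q) ^ ?q * a ^ ?q + (a ^ ?q) ^ 2) = 0"
      unfolding E_def by (simp add: algebra_simps power2_eq_square)
    then show ?thesis by (simp add: add_eq0_iff)
  qed
  have wq: "w ^ ?q = s"
  proof -
    have "(w ^ ?q) ^ (2^1) = (a ^ ?q + s ^ ?q) ^ (2^1)" unfolding w_def frob_add ..
    also have "\<dots> = (a ^ ?q) ^ 2 + (s ^ (2^1)) ^ ?q" unfolding frob_add
      by (simp add: power_mult[symmetric] mult.commute)
    also have "(s ^ (2^1)) ^ ?q = lam ^ ?q * (a ^ ?q) ^ ?q * a ^ ?q"
      unfolding s by (simp add: power_mult_distrib)
    also have "(a ^ ?q) ^ 2 + lam ^ ?q * (a ^ ?q) ^ ?q * a ^ ?q = s ^ (2^1)"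
      unfolding s e1 by (simp add: add.commute)
    finally have "(w ^ ?q) ^ (2^1) = s ^ (2^1)" .
    then show ?thesis by (metis injD[OF frob_inj[of 1]])
  qed
  have sn: "s \<noteq> 0"
  proof
    assume "s = 0"
    then have "w = 0" using wq by simp
    then show False using a0 aw \<open>s = 0\<close> by simp
  qed
  have wn: "w \<noteq> 0" using sn wq by (auto simp: power_0_left)
  have ws: "w \<noteq> s" using a0 aw add_eq0_iff by auto
  define t where "t = s ^ ?q"
  have tn: "t \<noteq> 0" using sn unfolding t_def by simp
  have aq: "a ^ ?q = s + t" unfolding aw frob_add wq t_def ..
  have stn: "s + t \<noteq> 0" using a0 aq by (metis pow_ne0)
  define v0 where "v0 = 1 / w"
  have v0q: "v0 ^ ?q = 1 / s" unfolding v0_def power_divide wq by simp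
  have v0qq: "(v0 ^ ?q) ^ ?q = 1 / t" unfolding v0q power_divide t_def by simp
  have nf: "v0 ^ ?q \<noteq> v0"
  proof
    assume "v0 ^ ?q = v0"
    then have "1 / s = 1 / w" using v0q unfolding v0_def by simp
    then show False using ws by simp
  qed
  have ng: "v0 ^ (2 ^ gcd k n) \<noteq> v0" using nf fix_dvd[of "gcd k n" k v0] by auto
  have s2: "lam * a ^ (?q + 1) = s ^ 2" using s by simp
  have "lam = s ^ 2 / a ^ (?q + 1)"
    using s2 a0 by (metis nonzero_eq_divide_eq pow_ne0)
  also have "\<dots> = s ^ 2 / ((s + t) * (w + s))" unfolding aw[symmetric] power_add aq[symmetric] by simp
  also have "\<dots> = ((1/t) * (1/w)) / (((1/s) + (1/t)) * ((1/w) + (1/s)))"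
    using sn tn wn stn a0 aw by (simp add: field_simps power2_eq_square)
  also have "\<dots> = v0 ^ (2 ^ (2 * k) + 1) / (v0 + v0 ^ ?q) ^ (?q + 1)"
  proof -
    have p: "(2::nat)^(2*k) = 2^k * 2^k" by (simp add: mult_2 power_add)
    have "v0 ^ (2 ^ (2 * k) + 1) = (v0^?q)^?q * v0"
      unfolding p by (simp only: power_add power_mult power_one_right)
    also have "\<dots> = (1/t) * (1/w)" unfolding v0qq by (simp add: v0_def)
    finally have "v0 ^ (2 ^ (2 * k) + 1) = (1/t) * (1/w)" .
    moreover have "(v0 + v0 ^ ?q) ^ (?q + 1) = ((1/s) + (1/t)) * ((1/w) + (1/s))"
      using v0q v0qq unfolding power_add frob_add by (simp add: v0_def)
    ultimately show ?thesis by simp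
  qed
  finally show ?thesis using ng by blast
qed

end

end

theorem theorem2:
  fixes n k :: nat and lam :: "'a::{field,finite}" and \<alpha> :: "nat \<Rightarrow> 'a"
  assumes "n \<ge> 1" and "k \<ge> 1"
    and "card (UNIV :: 'a set) = 2 ^ n"
    and "self_dual_basis n \<alpha>"
    and "lam \<noteq> 0"
  shows "negabent n \<alpha> (\<lambda>x. tr n (lam * x ^ (2 ^ k + 1))) \<longleftrightarrow>
         \<not> (\<exists>v0 v1. v0 ^ (2 ^ gcd k n) \<noteq> v0 \<and> v1 = v0 ^ (2 ^ k) \<and>
                   lam = v0 ^ (2 ^ (2 * k) + 1) / (v0 + v1) ^ (2 ^ k + 1))"
proof -
  interpret nb n \<alpha> using assms by unfold_locales auto
  have "negabent n \<alpha> (\<lambda>x. tr n (lam * x ^ (2 ^ k + 1))) \<longleftrightarrow> (\<forall>a. E lam k a = 0 \<longrightarrow> a = 0)"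
    using negabent_iff_H H_iff by blast
  also have "\<dots> \<longleftrightarrow> \<not> (\<exists>v0 v1. v0 ^ (2 ^ gcd k n) \<noteq> v0 \<and> v1 = v0 ^ (2 ^ k) \<and>
                   lam = v0 ^ (2 ^ (2 * k) + 1) / (v0 + v1) ^ (2 ^ k + 1))"
    using v0_to_a a_to_v0 by blast
  finally show ?thesis .
qed

end
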